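(* Under the setting below (in which $\mathbb{P}(X_{0:t}(a_{1:t})\in B_{0:t})>0$ and $\mathbb{P}(\underline y\le Y(a_{1:t})\le\overline y\mid X_{0:t}(a_{1:t})\in B_{0:t})=1$), there exist potential outcomes $(\tilde X_{0:T}(a'_{1:T}),\tilde Y(a'_{1:t}):a'_{1:T}\in\mathcal{A}_{1:T})$, also satisfying $\mathbb{P}(\underline y\le\tilde Y(a_{1:t})\le\overline y\mid\tilde X_{0:t}(a_{1:t})\in B_{0:t})=1$, with $$(\tilde X_{0:T}(A_{1:T}),\tilde Y(A_{1:t}),A_{1:T})=(X_{0:T}(A_{1:T}),Y(A_{1:t}),A_{1:T})\quad\text{almost surely},$$ but for which $\mathbb{E}[\tilde Y(a_{1:t})\mid\tilde X_{0:t}(a_{1:t})\in B_{0:t}]=\mathbb{E}[\underline Y\mid X_{0:N}(A_{1:N})\in B_{0:N}]$. The corresponding statement with $\overline Y$ in place of $\underline Y$ also holds.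
   Context: Horizon $T\ge1$, $\mathcal{X}_t=\mathbb{R}^{d_t}$, finite action spaces $\mathcal{A}_t$; potential outcomes $X_0$, $X_t(a_{1:t})\in\mathcal{X}_t$, random actions $A_{1:T}$, real-valued potential outcomes $Y(a_{1:t})$ defined jointly; $X_{0:t}(a_{1:t})=(X_0,X_1(a_1),\dots,X_t(a_{1:t}))$. Fixed $t\in\{1,\dots,T\}$, $a_{1:t}\in\mathcal{A}_{1:t}$, measurable $B_{0:t}=B_0\times\cdots\times B_t$, $\underline y,\overline y\in\mathbb{R}$. $N=\max\{0\le s\le t:A_{1:s}=a_{1:s}\}$; $\underline Y=\mathbb{1}(A_{1:t}=a_{1:t})Y(A_{1:t})+\mathbb{1}(A_{1:t}\ne a_{1:t})\underline y$, $\overline Y$ likewise with $\overline y$. Quantities evaluated at random actions denote the potential outcome indexed by the realized actions. *)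

theory Defs
  imports "HOL-Probability.Probability"
begin

definition obs_space :: "(nat \<Rightarrow> nat) \<Rightarrow> nat \<Rightarrow> (nat \<Rightarrow> real) measure" where
  "obs_space d s = PiM {..< d s} (\<lambda>_. borel)"

text \<open>Action sequences a_{1:s} are lists of length s; entry i (0-based) lies in Act (i+1).\<close>
definition valid_acts :: "(nat \<Rightarrow> 'a set) \<Rightarrow> nat \<Rightarrow> 'a list \<Rightarrow> bool" where
  "valid_acts Act s l \<longleftrightarrow> length l = s \<and> (\<forall>i<s. l ! i \<in> Act (Suc i))"

definition acts_prefix :: "(nat \<Rightarrow> 'w \<Rightarrow> 'a) \<Rightarrow> nat \<Rightarrow> 'w \<Rightarrow> 'a list" where
  "acts_prefix A s \<omega> = map (\<lambda>i. A i \<omega>) [1..<Suc s]"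

definition last_agree :: "(nat \<Rightarrow> 'w \<Rightarrow> 'a) \<Rightarrow> 'a list \<Rightarrow> nat \<Rightarrow> 'w \<Rightarrow> nat" where
  "last_agree A a t \<omega> = Max {s. s \<le> t \<and> acts_prefix A s \<omega> = take s a}"

text \<open>Potential outcomes: X s l is X_s(a_{1:s}) for valid l of length s (X 0 [] = X_0),
  Y l is Y(a_{1:t}) for valid l of length t; all are random variables.\<close>
definition potential_outcomes ::
  "'w measure \<Rightarrow> nat \<Rightarrow> nat \<Rightarrow> (nat \<Rightarrow> nat) \<Rightarrow> (nat \<Rightarrow> 'a set)
    \<Rightarrow> (nat \<Rightarrow> 'a list \<Rightarrow> 'w \<Rightarrow> (nat \<Rightarrow> real)) \<Rightarrow> ('a list \<Rightarrow> 'w \<Rightarrow> real) \<Rightarrow> bool" where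
  "potential_outcomes M T t d Act X Y \<longleftrightarrow>
     (\<forall>s\<le>T. \<forall>l. valid_acts Act s l \<longrightarrow> X s l \<in> M \<rightarrow>\<^sub>M obs_space d s) \<and>
     (\<forall>l. valid_acts Act t l \<longrightarrow> Y l \<in> borel_measurable M)"

definition fixed_event ::
  "'w measure \<Rightarrow> (nat \<Rightarrow> 'a list \<Rightarrow> 'w \<Rightarrow> (nat \<Rightarrow> real)) \<Rightarrow> 'a list \<Rightarrow> nat
     \<Rightarrow> (nat \<Rightarrow> (nat \<Rightarrow> real) set) \<Rightarrow> 'w set" where
  "fixed_event M X a t B = {\<omega> \<in> space M. \<forall>s\<le>t. X s (take s a) \<omega> \<in> B s}"

definition realised_event ::
  "'w measure \<Rightarrow> (nat \<Rightarrow> 'a list \<Rightarrow> 'w \<Rightarrow> (nat \<Rightarrow> real)) \<Rightarrow> (nat \<Rightarrow> 'w \<Rightarrow> 'a)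
     \<Rightarrow> (nat \<Rightarrow> (nat \<Rightarrow> real) set) \<Rightarrow> ('w \<Rightarrow> nat) \<Rightarrow> 'w set" where
  "realised_event M X A B N = {\<omega> \<in> space M. \<forall>s\<le>N \<omega>. X s (acts_prefix A s \<omega>) \<omega> \<in> B s}"

definition cond_prob_ev :: "'w measure \<Rightarrow> 'w set \<Rightarrow> 'w set \<Rightarrow> real" where
  "cond_prob_ev M F E = measure M (F \<inter> E) / measure M E"

definition cond_exp_ev :: "'w measure \<Rightarrow> ('w \<Rightarrow> real) \<Rightarrow> 'w set \<Rightarrow> real" where
  "cond_exp_ev M f E = (\<integral>\<omega>. indicator E \<omega> * f \<omega> \<partial>M) / measure M E"

text \<open>Y-underbar (resp. Y-overbar) with default value y.\<close>
definition clipped_outcome ::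
  "(nat \<Rightarrow> 'w \<Rightarrow> 'a) \<Rightarrow> ('a list \<Rightarrow> 'w \<Rightarrow> real) \<Rightarrow> 'a list \<Rightarrow> nat \<Rightarrow> real \<Rightarrow> 'w \<Rightarrow> real" where
  "clipped_outcome A Y a t y \<omega> =
     (if acts_prefix A t \<omega> = a then Y (acts_prefix A t \<omega>) \<omega> else y)"

end

theory Submission
  imports Defs "HOL-Probability.Probability"
begin

lemma length_acts_prefix[simp]: "length (acts_prefix A s \<omega>) = s"
  unfolding acts_prefix_def by simp
lemma nth_acts_prefix[simp]: "i < s \<Longrightarrow> acts_prefix A s \<omega> ! i = A (Suc i) \<omega>"
  unfolding acts_prefix_def by (simp del: upt_Suc)
lemma acts_prefix_eq_iff:
  "acts_prefix A s \<omega> = l \<longleftrightarrow> length l = s \<and> (\<forall>i\<in>{..<s}. A (Suc i) \<omega> = l ! i)"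
  by (auto simp: list_eq_iff_nth_eq)
lemma pred_prefix0:
  assumes "\<And>i. i < s \<Longrightarrow> A (Suc i) \<in> M \<rightarrow>\<^sub>M count_space UNIV"
  shows "Measurable.pred M (\<lambda>\<omega>. (\<forall>i\<in>{..<s}. A (Suc i) \<omega> = l ! i))"
  apply (rule pred_intros_finite(3)[where P="\<lambda>\<omega> i. A (Suc i) \<omega> = l ! i"])
   apply (rule finite_lessThan)
  apply (rule pred_eq_const1)
  using assms by auto

lemma pred_prefix:
  assumes "\<And>i. i < s \<Longrightarrow> A (Suc i) \<in> M \<rightarrow>\<^sub>M count_space UNIV"
  shows "Measurable.pred M (\<lambda>\<omega>. acts_prefix A s \<omega> = l)"
proof (cases "length l = s")
  case True
  have "Measurable.pred M (\<lambda>\<omega>. (\<forall>i\<in>{..<s}. A (Suc i) \<omega> = l ! i))"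
    by (rule pred_prefix0[of s A M l, OF assms])
  moreover have "(\<lambda>\<omega>. acts_prefix A s \<omega> = l) = (\<lambda>\<omega>. (\<forall>i\<in>{..<s}. A (Suc i) \<omega> = l ! i))"
    using True by (simp add: acts_prefix_eq_iff)
  ultimately show ?thesis by simp
next
  case False
  have "(\<lambda>\<omega>. acts_prefix A s \<omega> = l) = (\<lambda>\<omega>. False)"
    using False by (auto simp: acts_prefix_eq_iff)
  moreover have "Measurable.pred M (\<lambda>\<omega>. False)"
    by (rule measurable_const) simp
  ultimately show ?thesis by simp
qed

lemma prefix_take:
  assumes "s \<le> n" shows "take s (acts_prefix A n \<omega>) = acts_prefix A s \<omega>"
  using assms by (simp add: list_eq_iff_nth_eq)

lemma agree_iff_le_N:
  assumes "s \<le> t" "length a = t"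
  shows "acts_prefix A s \<omega> = take s a \<longleftrightarrow> s \<le> last_agree A a t \<omega>"
proof -
  let ?S = "{s. s \<le> t \<and> acts_prefix A s \<omega> = take s a}"
  have fin: "finite ?S" by (rule finite_subset[of _ "{..t}"]) auto
  have z: "0 \<in> ?S" by (simp add: acts_prefix_def)
  have N: "last_agree A a t \<omega> \<in> ?S" unfolding last_agree_def
    using fin z by (intro Max_in) auto
  show ?thesis
  proof
    assume "acts_prefix A s \<omega> = take s a"
    then show "s \<le> last_agree A a t \<omega>" unfolding last_agree_def using assms fin by (intro Max_ge) auto
  next
    assume le: "s \<le> last_agree A a t \<omega>"
    have "acts_prefix A s \<omega> = take s (acts_prefix A (last_agree A a t \<omega>) \<omega>)"
      using prefix_take[OF le, of A \<omega>] by simp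
    also have "\<dots> = take s a" using N le by (simp add: min_def)
    finally show "acts_prefix A s \<omega> = take s a" .
  qed
qed

lemma N_le: "last_agree A a t \<omega> \<le> t"
proof -
  let ?S = "{s. s \<le> t \<and> acts_prefix A s \<omega> = take s a}"
  have fin: "finite ?S" by (rule finite_subset[of _ "{..t}"]) auto
  have z: "0 \<in> ?S" by (simp add: acts_prefix_def)
  have N: "last_agree A a t \<omega> \<in> ?S" unfolding last_agree_def
    using fin z by (intro Max_in) auto
  then show ?thesis by simp
qed

lemma fixed_event_sets:
  assumes "\<And>s. s \<le> t \<Longrightarrow> Z s (take s a) \<in> M \<rightarrow>\<^sub>M obs_space d s"
    and "\<And>s. s \<le> t \<Longrightarrow> B s \<in> sets (obs_space d s)"
  shows "fixed_event M Z a t B \<in> sets M"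
proof -
  have "Measurable.pred M (\<lambda>\<omega>. \<forall>s\<in>{..t}. Z s (take s a) \<omega> \<in> B s)"
    by (rule pred_intros_finite(3)[where P="\<lambda>\<omega> s. Z s (take s a) \<omega> \<in> B s"])
       (simp, rule pred_sets2[OF assms(2) assms(1)], simp, simp)
  then have "{\<omega>\<in>space M. \<forall>s\<in>{..t}. Z s (take s a) \<omega> \<in> B s} \<in> sets M"
    by (simp add: pred_def)
  moreover have "{\<omega>\<in>space M. \<forall>s\<in>{..t}. Z s (take s a) \<omega> \<in> B s} = fixed_event M Z a t B"
    unfolding fixed_event_def by auto
  ultimately show ?thesis by simp
qed

lemma main_part:
  fixes M :: "'w measure" and T t :: nat and d :: "nat \<Rightarrow> nat"
    and Act :: "nat \<Rightarrow> 'a set"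
    and A :: "nat \<Rightarrow> 'w \<Rightarrow> 'a"
    and X :: "nat \<Rightarrow> 'a list \<Rightarrow> 'w \<Rightarrow> (nat \<Rightarrow> real)"
    and Y :: "'a list \<Rightarrow> 'w \<Rightarrow> real"
    and a :: "'a list" and B :: "nat \<Rightarrow> (nat \<Rightarrow> real) set"
    and ylo yhi y0 :: real
  assumes P: "prob_space M"
    and "1 \<le> T" and "1 \<le> t" and tT: "t \<le> T"
    and Ameas: "\<And>s. 1 \<le> s \<Longrightarrow> s \<le> T \<Longrightarrow> A s \<in> M \<rightarrow>\<^sub>M count_space UNIV"
    and PO: "potential_outcomes M T t d Act X Y"
    and va: "valid_acts Act t a"
    and Bs: "\<And>s. s \<le> t \<Longrightarrow> B s \<in> sets (obs_space d s)"
    and Epos: "measure M (fixed_event M X a t B) > 0"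
    and cp: "cond_prob_ev M {\<omega> \<in> space M. ylo \<le> Y a \<omega> \<and> Y a \<omega> \<le> yhi} (fixed_event M X a t B) = 1"
    and y0: "ylo \<le> y0" "y0 \<le> yhi"
  shows
   "\<exists>X' Y'. potential_outcomes M T t d Act X' Y' \<and>
      cond_prob_ev M {\<omega> \<in> space M. ylo \<le> Y' a \<omega> \<and> Y' a \<omega> \<le> yhi} (fixed_event M X' a t B) = 1 \<and>
      (AE \<omega> in M. (\<forall>s\<le>T. X' s (acts_prefix A s \<omega>) \<omega> = X s (acts_prefix A s \<omega>) \<omega>) \<and>
                   Y' (acts_prefix A t \<omega>) \<omega> = Y (acts_prefix A t \<omega>) \<omega>) \<and>
      cond_exp_ev M (Y' a) (fixed_event M X' a t B) =
        cond_exp_ev M (clipped_outcome A Y a t y0) (realised_event M X A B (last_agree A a t))"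
proof -
  interpret prob_space M by (rule P)
  define b where "b s = (SOME x. x \<in> B s)" for s
  define X' where "X' s l \<omega> = (if s \<le> t \<and> l = take s a \<and> acts_prefix A s \<omega> \<noteq> take s a then b s else X s l \<omega>)" for s l \<omega>
  define Y' where "Y' l \<omega> = (if l = a \<and> acts_prefix A t \<omega> \<noteq> a then y0 else Y l \<omega>)" for l \<omega>
  let ?E = "fixed_event M X a t B"
  let ?E' = "fixed_event M X' a t B"
  let ?F = "{\<omega> \<in> space M. ylo \<le> Y a \<omega> \<and> Y a \<omega> \<le> yhi}"
  let ?F' = "{\<omega> \<in> space M. ylo \<le> Y' a \<omega> \<and> Y' a \<omega> \<le> yhi}"
  let ?N = "last_agree A a t"
  have la: "length a = t" using va by (simp add: valid_acts_def)
  have vt: "valid_acts Act s (take s a)" if "s \<le> t" for s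
    using va that by (auto simp: valid_acts_def)
  have Xm: "X s l \<in> M \<rightarrow>\<^sub>M obs_space d s" if "s \<le> T" "valid_acts Act s l" for s l
    using PO that by (simp add: potential_outcomes_def)
  have Ym: "Y l \<in> borel_measurable M" if "valid_acts Act t l" for l
    using PO that by (simp add: potential_outcomes_def)
  have "?E \<noteq> {}" using Epos by auto
  then obtain \<omega>0 where "\<omega>0 \<in> ?E" by blast
  then have bB: "b s \<in> B s" if "s \<le> t" for s
    using that unfolding b_def fixed_event_def by (metis (mono_tags, lifting) mem_Collect_eq someI_ex)
  have bsp: "b s \<in> space (obs_space d s)" if "s \<le> t" for s
    using bB[OF that] sets.sets_into_space[OF Bs[OF that]] by auto
  have predA: "Measurable.pred M (\<lambda>\<omega>. acts_prefix A s \<omega> = l)" if "s \<le> T" for s l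
    by (rule pred_prefix) (use that in \<open>auto intro!: Ameas\<close>)
  have X'm: "X' s l \<in> M \<rightarrow>\<^sub>M obs_space d s" if "s \<le> T" "valid_acts Act s l" for s l
  proof (cases "s \<le> t \<and> l = take s a")
    case True
    have "(\<lambda>\<omega>. if \<not> acts_prefix A s \<omega> = take s a then b s else X s l \<omega>) \<in> M \<rightarrow>\<^sub>M obs_space d s"
      apply (rule measurable_If)
      using bsp True that Xm predA[OF that(1), of "take s a"]
      by (auto simp: pred_def intro!: sets.sets_Collect_neg)
    then show ?thesis using True unfolding X'_def by simp
  next
    case False
    then have "X' s l = X s l" unfolding X'_def by (intro ext) auto
    then show ?thesis using Xm[OF that] by simp
  qed
  have Y'm: "Y' l \<in> borel_measurable M" if "valid_acts Act t l" for l
  proof (cases "l = a")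
    case True
    have "(\<lambda>\<omega>. if \<not> acts_prefix A t \<omega> = a then y0 else Y l \<omega>) \<in> borel_measurable M"
      apply (rule measurable_If)
      using True that Ym predA[OF tT, of "a"]
      by (auto simp: pred_def intro!: sets.sets_Collect_neg)
    then show ?thesis using True unfolding Y'_def by simp
  next
    case False
    then have "Y' l = Y l" unfolding Y'_def by (intro ext) auto
    then show ?thesis using Ym[OF that] by simp
  qed
  have PO': "potential_outcomes M T t d Act X' Y'"
    using X'm Y'm by (simp add: potential_outcomes_def)
  have AE: "AE \<omega> in M. (\<forall>s\<le>T. X' s (acts_prefix A s \<omega>) \<omega> = X s (acts_prefix A s \<omega>) \<omega>) \<and>
                   Y' (acts_prefix A t \<omega>) \<omega> = Y (acts_prefix A t \<omega>) \<omega>"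
    by (rule AE_I2) (auto simp: X'_def Y'_def)
  have Esets: "?E \<in> sets M"
    by (rule fixed_event_sets) (use Xm vt tT Bs in auto)
  have E'sets: "?E' \<in> sets M"
    by (rule fixed_event_sets) (use X'm vt tT Bs in auto)
  have Fsets: "?F \<in> sets M" using Ym[OF va] by measurable
  have F'sets: "?F' \<in> sets M" using Y'm[OF va] by measurable
  have Eeq: "?E' = realised_event M X A B ?N"
  proof -
    have "(\<forall>s\<le>t. X' s (take s a) \<omega> \<in> B s) \<longleftrightarrow> (\<forall>s\<le>?N \<omega>. X s (acts_prefix A s \<omega>) \<omega> \<in> B s)" for \<omega>
    proof -
      have "X' s (take s a) \<omega> \<in> B s \<longleftrightarrow> (s \<le> ?N \<omega> \<longrightarrow> X s (acts_prefix A s \<omega>) \<omega> \<in> B s)" if "s \<le> t" for s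
        using agree_iff_le_N[OF that la, of A \<omega>] bB[OF that] that
        by (auto simp: X'_def)
      then show ?thesis using N_le[of A a t \<omega>] by (metis order.trans)
    qed
    then show ?thesis unfolding fixed_event_def realised_event_def by auto
  qed
  have Yeq: "Y' a = clipped_outcome A Y a t y0"
    by (rule ext) (auto simp: Y'_def clipped_outcome_def)
  have EE': "?E \<subseteq> ?E'" using bB unfolding fixed_event_def X'_def by auto
  have ylh: "ylo \<le> yhi" using y0 by simp
  have E'pos: "measure M ?E' > 0"
    using Epos finite_measure_mono[OF EE' E'sets] by simp
  have mEF: "measure M (?F \<inter> ?E) = measure M ?E"
    using cp Epos by (simp add: cond_prob_ev_def)
  have "measure M (?E - ?F \<inter> ?E) = 0"
    using measure_Diff[of M ?E "?F \<inter> ?E"] Esets Fsets mEF by (simp add: Int_commute)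
  moreover have "?E' - ?F' \<inter> ?E' \<subseteq> ?E - ?F \<inter> ?E"
  proof
    fix \<omega> assume w: "\<omega> \<in> ?E' - ?F' \<inter> ?E'"
    then have ap: "acts_prefix A t \<omega> = a" "\<omega> \<in> space M"
      using y0 unfolding Y'_def fixed_event_def by (auto split: if_splits)
    have "acts_prefix A s \<omega> = take s a" if "s \<le> t" for s
      using prefix_take[OF that, of A \<omega>] ap by simp
    then have "\<omega> \<in> ?E" using w unfolding fixed_event_def X'_def by auto
    moreover have "\<omega> \<notin> ?F" using w ap unfolding Y'_def by auto
    ultimately show "\<omega> \<in> ?E - ?F \<inter> ?E" by blast
  qed
  ultimately have "measure M (?E' - ?F' \<inter> ?E') = 0"
    using finite_measure_mono[of "?E' - ?F' \<inter> ?E'" "?E - ?F \<inter> ?E"] Esets Fsets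
    by (simp add: measure_nonneg order.antisym)
  then have "measure M (?F' \<inter> ?E') = measure M ?E'"
    using measure_Diff[of M ?E' "?F' \<inter> ?E'"] E'sets F'sets by (simp add: Int_commute)
  then have cp': "cond_prob_ev M ?F' ?E' = 1"
    using E'pos by (simp add: cond_prob_ev_def)
  show ?thesis
    by (rule exI[of _ X'], rule exI[of _ Y']) (use PO' cp' AE Eeq Yeq in simp)
qed

theorem proposition4p6:
  fixes M :: "'w measure" and T t :: nat and d :: "nat \<Rightarrow> nat"
    and Act :: "nat \<Rightarrow> 'a set"
    and A :: "nat \<Rightarrow> 'w \<Rightarrow> 'a"
    and X :: "nat \<Rightarrow> 'a list \<Rightarrow> 'w \<Rightarrow> (nat \<Rightarrow> real)"
    and Y :: "'a list \<Rightarrow> 'w \<Rightarrow> real"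
    and a :: "'a list" and B :: "nat \<Rightarrow> (nat \<Rightarrow> real) set"
    and ylo yhi :: real
  assumes "prob_space M"
    and "1 \<le> T" and "1 \<le> t" and "t \<le> T"
    and "\<And>s. 1 \<le> s \<Longrightarrow> s \<le> T \<Longrightarrow> finite (Act s)"
    and "\<And>s. 1 \<le> s \<Longrightarrow> s \<le> T \<Longrightarrow> A s \<in> M \<rightarrow>\<^sub>M count_space UNIV"
    and "\<And>s \<omega>. 1 \<le> s \<Longrightarrow> s \<le> T \<Longrightarrow> \<omega> \<in> space M \<Longrightarrow> A s \<omega> \<in> Act s"
    and "potential_outcomes M T t d Act X Y"
    and "valid_acts Act t a"
    and "\<And>s. s \<le> t \<Longrightarrow> B s \<in> sets (obs_space d s)"
    and "measure M (fixed_event M X a t B) > 0"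
    and "cond_prob_ev M {\<omega> \<in> space M. ylo \<le> Y a \<omega> \<and> Y a \<omega> \<le> yhi} (fixed_event M X a t B) = 1"
  shows
   "(\<exists>X' Y'. potential_outcomes M T t d Act X' Y' \<and>
      cond_prob_ev M {\<omega> \<in> space M. ylo \<le> Y' a \<omega> \<and> Y' a \<omega> \<le> yhi} (fixed_event M X' a t B) = 1 \<and>
      (AE \<omega> in M. (\<forall>s\<le>T. X' s (acts_prefix A s \<omega>) \<omega> = X s (acts_prefix A s \<omega>) \<omega>) \<and>
                   Y' (acts_prefix A t \<omega>) \<omega> = Y (acts_prefix A t \<omega>) \<omega>) \<and>
      cond_exp_ev M (Y' a) (fixed_event M X' a t B) =
        cond_exp_ev M (clipped_outcome A Y a t ylo) (realised_event M X A B (last_agree A a t)))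
  \<and> (\<exists>X' Y'. potential_outcomes M T t d Act X' Y' \<and>
      cond_prob_ev M {\<omega> \<in> space M. ylo \<le> Y' a \<omega> \<and> Y' a \<omega> \<le> yhi} (fixed_event M X' a t B) = 1 \<and>
      (AE \<omega> in M. (\<forall>s\<le>T. X' s (acts_prefix A s \<omega>) \<omega> = X s (acts_prefix A s \<omega>) \<omega>) \<and>
                   Y' (acts_prefix A t \<omega>) \<omega> = Y (acts_prefix A t \<omega>) \<omega>) \<and>
      cond_exp_ev M (Y' a) (fixed_event M X' a t B) =
        cond_exp_ev M (clipped_outcome A Y a t yhi) (realised_event M X A B (last_agree A a t)))"
proof -
  interpret prob_space M by (rule assms(1))
  have "measure M ({\<omega> \<in> space M. ylo \<le> Y a \<omega> \<and> Y a \<omega> \<le> yhi} \<inter> fixed_event M X a t B) > 0"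
    using assms(11,12) by (simp add: cond_prob_ev_def divide_eq_1_iff)
  then have "{\<omega> \<in> space M. ylo \<le> Y a \<omega> \<and> Y a \<omega> \<le> yhi} \<inter> fixed_event M X a t B \<noteq> {}"
    by (metis measure_empty less_irrefl)
  then have ylh: "ylo \<le> yhi" by auto
  show ?thesis
    by (rule conjI[OF main_part[OF assms(1-4) assms(6) assms(8-12) order.refl ylh]
                      main_part[OF assms(1-4) assms(6) assms(8-12) ylh order.refl]])
qed

end
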